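(* Let $\kappa$ be a regular cardinal, $\lambda\le\kappa$, and let $X\subseteq\kappa^\kappa$ be a $(\kappa,\lambda)$-Borel$^*$ set. Then there is a $\kappa$-closed set $C\subseteq\kappa^\kappa\times\kappa^\kappa$ such that $X=\{\xi\mid\exists\eta\,(\xi,\eta)\in C\}$.
   Context: Basic $\kappa$-open sets: $N_\eta=\{\zeta\in\kappa^\kappa\mid\eta\subseteq\zeta\}$ for $\eta:X\to\kappa$, $X\subseteq\kappa$, $|X|<\kappa$, and $\emptyset$; in $\kappa^\kappa\times\kappa^\kappa$ they are products $N_\eta\times N_\xi$. A set is $\kappa$-open if it is a union of at most $\kappa$ basic $\kappa$-open sets, $\kappa$-closed if its complement is $\kappa$-open; $\kappa$-Borel sets form the smallest class containing the basic $\kappa$-open sets closed under complements and unions and intersections of at most $\kappa$ sets. A good labelled $(\kappa,\lambda)$-tree is a pair $(T,L)$ where $T$ is a (rooted) tree without branches of length $\kappa$, every element has at most $\kappa$ immediate successors, $|T|\le\lambda$, every increasing sequence in $T$ has a supremum in $T$, $L(t)\in\{\bigcup,\bigcap\}$ for non-leaves $t$, and $L(t)$ is a basic $\kappa$-open set for leaves $t$. Borel$^*$-game $GB(\xi,(T,L))$: the play starts at the root; at a non-leaf $t$, II chooses an immediate successor if $L(t)=\bigcup$, I chooses if $L(t)=\bigcap$; at limits the play moves to the supremum; the play ends at a leaf $t$ and II wins iff $\xi\in L(t)$. $(T,L)$ is a $(\kappa,\lambda)$-Borel$^*$-code if it is a good labelled $(\kappa,\lambda)$-tree and there is $\pi$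 with: (i) $\mathrm{dom}(\pi)$ a $\kappa$-closed subset of $\kappa^\kappa$ and each $\pi(\eta)$ a strategy of II; (ii) whenever II has a winning strategy in $GB(\xi,(T,L))$, some $\pi(\eta)$ is one; (iii) $\{(\xi,\eta)\mid\eta\in\mathrm{dom}(\pi),\ \pi(\eta)$ winning for II in $GB(\xi,(T,L))\}$ is $\kappa$-Borel. A set $X\subseteq\kappa^\kappa$ is $(\kappa,\lambda)$-Borel$^*$ if there is a $(\kappa,\lambda)$-Borel$^*$-code $(T,L)$ with $\xi\in X\iff$ II has a winning strategy in $GB(\xi,(T,L))$, for all $\xi\in\kappa^\kappa$. *)

theory Defs
  imports Main
begin

unbundle cardinal_syntax

text \<open>The cardinal kappa is represented by a type 'k carrying a
cardinal order r (Card_order r, Field r = UNIV), so that the elements of kappa are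
the elements of 'k and kappa^kappa is the function space 'k => 'k.
A partial function eta : X -> kappa with X a subset of kappa is a map 'k => 'k option.\<close>

definition bN :: "('k \<Rightarrow> 'k option) \<Rightarrow> ('k \<Rightarrow> 'k) set" where
  "bN eta = {zeta. \<forall>x\<in>dom eta. eta x = Some (zeta x)}"

definition basic_open :: "('k \<times> 'k) set \<Rightarrow> ('k \<Rightarrow> 'k) set set" where
  "basic_open r = {bN eta | eta. |dom eta| <o r} \<union> {{}}"

definition basic_open2 :: "('k \<times> 'k) set \<Rightarrow> (('k \<Rightarrow> 'k) \<times> ('k \<Rightarrow> 'k)) set set" where
  "basic_open2 r = {bN eta \<times> bN xi | eta xi. |dom eta| <o r \<and> |dom xi| <o r} \<union> {{}}"

definition k_open :: "('k \<times> 'k) set \<Rightarrow> 'a set set \<Rightarrow> 'a set \<Rightarrow> bool" where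
  "k_open r B U \<longleftrightarrow> (\<exists>F. F \<subseteq> B \<and> |F| \<le>o r \<and> U = \<Union>F)"

definition k_closed :: "('k \<times> 'k) set \<Rightarrow> 'a set set \<Rightarrow> 'a set \<Rightarrow> bool" where
  "k_closed r B C \<longleftrightarrow> k_open r B (- C)"

inductive_set k_borel :: "('k \<times> 'k) set \<Rightarrow> 'a set set \<Rightarrow> 'a set set"
  for r :: "('k \<times> 'k) set" and B :: "'a set set" where
  basic: "U \<in> B \<Longrightarrow> U \<in> k_borel r B"
| compl: "U \<in> k_borel r B \<Longrightarrow> - U \<in> k_borel r B"
| union: "\<forall>U\<in>F. U \<in> k_borel r B \<Longrightarrow> |F| \<le>o r \<Longrightarrow> \<Union>F \<in> k_borel r B"
| inter: "\<forall>U\<in>F. U \<in> k_borel r B \<Longrightarrow> |F| \<le>o r \<Longrightarrow> \<Inter>F \<in> k_borel r B"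

text \<open>A tree is a set T of nodes (taken inside 'k, which is no restriction
since |T| <= lambda <= kappa) with a partial order R (the tree order, reflexive)
such that the predecessors of every node are well-ordered, and with a root.\<close>

definition is_tree :: "'k set \<Rightarrow> ('k \<times> 'k) set \<Rightarrow> bool" where
  "is_tree T R \<longleftrightarrow>
     R \<subseteq> T \<times> T \<and>
     (\<forall>t\<in>T. (t, t) \<in> R) \<and>
     (\<forall>s t. (s, t) \<in> R \<longrightarrow> (t, s) \<in> R \<longrightarrow> s = t) \<and>
     (\<forall>s t u. (s, t) \<in> R \<longrightarrow> (t, u) \<in> R \<longrightarrow> (s, u) \<in> R) \<and>
     (\<forall>t\<in>T. \<forall>s u. (s, t) \<in> R \<longrightarrow> (u, t) \<in> R \<longrightarrow> (s, u) \<in> R \<or> (u, s) \<in> R) \<and>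
     wf {(s, t). (s, t) \<in> R \<and> s \<noteq> t} \<and>
     (\<exists>rt\<in>T. \<forall>t\<in>T. (rt, t) \<in> R)"

definition tree_root :: "'k set \<Rightarrow> ('k \<times> 'k) set \<Rightarrow> 'k" where
  "tree_root T R = (THE rt. rt \<in> T \<and> (\<forall>t\<in>T. (rt, t) \<in> R))"

definition is_chain :: "'k set \<Rightarrow> ('k \<times> 'k) set \<Rightarrow> 'k set \<Rightarrow> bool" where
  "is_chain T R C \<longleftrightarrow> C \<subseteq> T \<and> (\<forall>x\<in>C. \<forall>y\<in>C. (x, y) \<in> R \<or> (y, x) \<in> R)"

definition imm_succ :: "'k set \<Rightarrow> ('k \<times> 'k) set \<Rightarrow> 'k \<Rightarrow> 'k set" where
  "imm_succ T R t = {s\<in>T. (t, s) \<in> R \<and> s \<noteq> t \<and>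
                        \<not> (\<exists>u\<in>T. (t, u) \<in> R \<and> (u, s) \<in> R \<and> u \<noteq> t \<and> u \<noteq> s)}"

definition is_leaf :: "'k set \<Rightarrow> ('k \<times> 'k) set \<Rightarrow> 'k \<Rightarrow> bool" where
  "is_leaf T R t \<longleftrightarrow> t \<in> T \<and> \<not> (\<exists>s\<in>T. (t, s) \<in> R \<and> s \<noteq> t)"

definition is_sup :: "'k set \<Rightarrow> ('k \<times> 'k) set \<Rightarrow> 'k set \<Rightarrow> 'k \<Rightarrow> bool" where
  "is_sup T R C s \<longleftrightarrow> s \<in> T \<and> (\<forall>c\<in>C. (c, s) \<in> R) \<and>
      (\<forall>u\<in>T. (\<forall>c\<in>C. (c, u) \<in> R) \<longrightarrow> (s, u) \<in> R)"

datatype 'a label = LUnion | LInter | LSet 'a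

text \<open>Good labelled (kappa,lambda)-tree.  "No branch of length kappa" is expressed
as: every chain has cardinality < kappa (equivalent, as chains are well-ordered).\<close>
definition good_labelled_tree ::
  "('k \<times> 'k) set \<Rightarrow> ('l \<times> 'l) set \<Rightarrow> 'k set \<Rightarrow> ('k \<times> 'k) set
     \<Rightarrow> ('k \<Rightarrow> ('k \<Rightarrow> 'k) set label) \<Rightarrow> bool" where
  "good_labelled_tree r l T R L \<longleftrightarrow>
     is_tree T R \<and>
     (\<forall>C. is_chain T R C \<longrightarrow> |C| <o r) \<and>
     (\<forall>t\<in>T. |imm_succ T R t| \<le>o r) \<and>
     |T| \<le>o l \<and>
     (\<forall>C. is_chain T R C \<and> C \<noteq> {} \<longrightarrow> (\<exists>s. is_sup T R C s)) \<and>
     (\<forall>t\<in>T. \<not> is_leaf T R t \<longrightarrow> L t = LUnion \<or> L t = LInter) \<and>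
     (\<forall>t\<in>T. is_leaf T R t \<longrightarrow> (\<exists>U. L t = LSet U \<and> U \<in> basic_open r))"

text \<open>Since in a tree the current
position determines the whole history of the play (its set of predecessors),
a strategy of II is a function assigning to each position where II moves
(nodes labelled by union) one of its immediate successors.\<close>
definition strategy_II :: "'k set \<Rightarrow> ('k \<times> 'k) set \<Rightarrow> ('k \<Rightarrow> ('k \<Rightarrow> 'k) set label)
     \<Rightarrow> ('k \<Rightarrow> 'k) \<Rightarrow> bool" where
  "strategy_II T R L \<sigma> \<longleftrightarrow>
     (\<forall>t\<in>T. \<not> is_leaf T R t \<and> L t = LUnion \<longrightarrow> \<sigma> t \<in> imm_succ T R t)"

text \<open>A node is reached by a play in which II follows sigma iff at every
union-labelled predecessor the play went through sigma's choice.\<close>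
definition consistent :: "'k set \<Rightarrow> ('k \<times> 'k) set \<Rightarrow> ('k \<Rightarrow> ('k \<Rightarrow> 'k) set label)
     \<Rightarrow> ('k \<Rightarrow> 'k) \<Rightarrow> 'k \<Rightarrow> bool" where
  "consistent T R L \<sigma> t \<longleftrightarrow>
     (\<forall>s\<in>T. (s, t) \<in> R \<and> s \<noteq> t \<and> L s = LUnion \<longrightarrow> (\<sigma> s, t) \<in> R)"

definition winning_II :: "'k set \<Rightarrow> ('k \<times> 'k) set \<Rightarrow> ('k \<Rightarrow> ('k \<Rightarrow> 'k) set label)
     \<Rightarrow> ('k \<Rightarrow> 'k) \<Rightarrow> ('k \<Rightarrow> 'k) \<Rightarrow> bool" where
  "winning_II T R L xi \<sigma> \<longleftrightarrow> strategy_II T R L \<sigma> \<and>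
     (\<forall>t. is_leaf T R t \<and> consistent T R L \<sigma> t \<longrightarrow> (\<exists>U. L t = LSet U \<and> xi \<in> U))"

definition II_wins :: "'k set \<Rightarrow> ('k \<times> 'k) set \<Rightarrow> ('k \<Rightarrow> ('k \<Rightarrow> 'k) set label)
     \<Rightarrow> ('k \<Rightarrow> 'k) \<Rightarrow> bool" where
  "II_wins T R L xi \<longleftrightarrow> (\<exists>\<sigma>. winning_II T R L xi \<sigma>)"

text \<open>(kappa,lambda)-Borel*-code; pi is given by its domain D and the map p.\<close>
definition borel_star_code ::
  "('k \<times> 'k) set \<Rightarrow> ('l \<times> 'l) set \<Rightarrow> 'k set \<Rightarrow> ('k \<times> 'k) set
     \<Rightarrow> ('k \<Rightarrow> ('k \<Rightarrow> 'k) set label) \<Rightarrow> bool" where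
  "borel_star_code r l T R L \<longleftrightarrow>
     good_labelled_tree r l T R L \<and>
     (\<exists>(D :: ('k \<Rightarrow> 'k) set) (p :: ('k \<Rightarrow> 'k) \<Rightarrow> ('k \<Rightarrow> 'k)).
        k_closed r (basic_open r) D \<and>
        (\<forall>eta\<in>D. strategy_II T R L (p eta)) \<and>
        (\<forall>xi. II_wins T R L xi \<longrightarrow> (\<exists>eta\<in>D. winning_II T R L xi (p eta))) \<and>
        {(xi, eta). eta \<in> D \<and> winning_II T R L xi (p eta)} \<in> k_borel r (basic_open2 r))"

definition borel_star :: "('k \<times> 'k) set \<Rightarrow> ('l \<times> 'l) set \<Rightarrow> ('k \<Rightarrow> 'k) set \<Rightarrow> bool" where
  "borel_star r l X \<longleftrightarrow>
     (\<exists>T R L. borel_star_code r l T R L \<and> (\<forall>xi. xi \<in> X \<longleftrightarrow> II_wins T R L xi))"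

end

theory Submission
  imports Defs
begin

lemma univ_le:
  assumes "Card_order r" "Field r = (UNIV :: 'k set)"
  shows "|UNIV :: 'k set| \<le>o r"
  using card_of_Field_ordIso[OF assms(1)] assms(2) ordIso_iff_ordLeq by metis

lemma fin_less:
  assumes "Card_order r" "Field r = (UNIV :: 'k set)" "infinite (UNIV :: 'k set)" "finite (A :: 'b set)"
  shows "|A| <o r"
proof -
  have "|A| <o |UNIV :: 'k set|"
    using finite_ordLess_infinite[OF card_of_Well_order card_of_Well_order] assms
    by (simp add: Field_card_of)
  then show ?thesis using card_of_Field_ordIso[OF assms(1)] assms(2) ordLess_ordIso_trans by metis
qed

lemma range3_le:
  assumes "Card_order r" "Field r = (UNIV :: 'k set)" "infinite (UNIV :: 'k set)"
  shows "|range (g :: 'k \<times> 'k \<times> 'k \<Rightarrow> 'a)| \<le>o r"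
proof -
  have u: "|UNIV :: 'k set| \<le>o r" using univ_le assms by blast
  have a: "|(UNIV :: 'k set) \<times> (UNIV :: 'k set)| \<le>o r"
    by (rule card_of_Times_ordLeq_infinite_Field[OF _ u u assms(1)]) (simp add: assms)
  then have a': "|UNIV :: ('k \<times> 'k) set| \<le>o r" by simp
  have b: "|(UNIV :: 'k set) \<times> (UNIV :: ('k \<times> 'k) set)| \<le>o r"
    by (rule card_of_Times_ordLeq_infinite_Field[OF _ u a' assms(1)]) (simp add: assms)
  then have "|UNIV :: ('k \<times> 'k \<times> 'k) set| \<le>o r" by simp
  then show ?thesis using card_of_image ordLeq_transitive by blast
qed

lemma bN_nonempty: "bN eta \<noteq> {}"
proof -
  have "(\<lambda>x. case eta x of Some v \<Rightarrow> v | None \<Rightarrow> undefined) \<in> bN eta"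
    unfolding bN_def by auto
  then show ?thesis by blast
qed

lemma bo2I: "|dom eta| <o r \<Longrightarrow> |dom xi| <o r \<Longrightarrow> bN eta \<times> bN xi \<in> basic_open2 r"
  unfolding basic_open2_def by blast

lemma bo2E: "{} \<in> basic_open2 r"
  unfolding basic_open2_def by blast

theorem corollary3p5:
  fixes r :: "('k \<times> 'k) set" and l :: "('l \<times> 'l) set" and X :: "('k \<Rightarrow> 'k) set"
  assumes "Card_order r" and "Field r = UNIV" and "infinite (UNIV :: 'k set)"
    and "regularCard r"
    and "Card_order l" and "(l, r) \<in> ordLeq"
    and "borel_star r l X"
  shows "\<exists>C :: (('k \<Rightarrow> 'k) \<times> ('k \<Rightarrow> 'k)) set.
           k_closed r (basic_open2 r) C \<and> X = {xi. \<exists>eta. (xi, eta) \<in> C}"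
proof -
  obtain T R L where code: "borel_star_code r l T R L" and X: "\<And>xi. xi \<in> X \<longleftrightarrow> II_wins T R L xi"
    using assms(7) unfolding borel_star_def by blast
  have good: "good_labelled_tree r l T R L" using code unfolding borel_star_code_def by blast
  have tree: "is_tree T R" using good unfolding good_labelled_tree_def by blast
  have chains: "\<And>C. is_chain T R C \<Longrightarrow> |C| <o r" using good unfolding good_labelled_tree_def by blast
  have leafs: "\<And>t. t \<in> T \<Longrightarrow> is_leaf T R t \<Longrightarrow> \<exists>U. L t = LSet U \<and> U \<in> basic_open r"
    using good unfolding good_labelled_tree_def by blast
  have RT: "R \<subseteq> T \<times> T" using tree unfolding is_tree_def by blast
  have lin: "\<And>t s u. t \<in> T \<Longrightarrow> (s, t) \<in> R \<Longrightarrow> (u, t) \<in> R \<Longrightarrow> (s, u) \<in> R \<or> (u, s) \<in> R"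
    using tree unfolding is_tree_def by blast
  define P where "P t = {s \<in> T. (s, t) \<in> R \<and> s \<noteq> t \<and> L s = LUnion}" for t
  define EC where "EC t = (\<forall>s\<in>P t. \<exists>u. u \<in> imm_succ T R s \<and> (u, t) \<in> R)" for t
  define th where "th t = (\<lambda>s. if s \<in> P t then Some (SOME u. u \<in> imm_succ T R s \<and> (u, t) \<in> R) else None)" for t
  define Ut where "Ut t = (case L t of LSet U \<Rightarrow> U | _ \<Rightarrow> {})" for t
  define et where "et t = (SOME eta. Ut t = bN eta \<and> |dom eta| <o r)" for t
  define g1 where "g1 = (\<lambda>(t::'k, s::'k, _::'k).
     if t \<in> T \<and> \<not> is_leaf T R t \<and> L t = LUnion \<and> s \<notin> imm_succ T R t
     then (UNIV :: ('k\<Rightarrow>'k) set) \<times> bN [t \<mapsto> s] else {})"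
  define g2 where "g2 = (\<lambda>(t::'k, x::'k, v::'k).
     if is_leaf T R t \<and> Ut t \<noteq> {} \<and> EC t \<and> x \<in> dom (et t) \<and> et t x \<noteq> Some v
     then bN [x \<mapsto> v] \<times> bN (th t) else {})"
  define g3 where "g3 = (\<lambda>(t::'k, _::'k, _::'k).
     if is_leaf T R t \<and> Ut t = {} \<and> EC t then (UNIV :: ('k\<Rightarrow>'k) set) \<times> bN (th t) else {})"
  have g1_eq: "g1 (t, s, w) = (if t \<in> T \<and> \<not> is_leaf T R t \<and> L t = LUnion \<and> s \<notin> imm_succ T R t
     then (UNIV :: ('k\<Rightarrow>'k) set) \<times> bN [t \<mapsto> s] else {})" for t s w unfolding g1_def by simp
  have g2_eq: "g2 (t, x, v) = (if is_leaf T R t \<and> Ut t \<noteq> {} \<and> EC t \<and> x \<in> dom (et t) \<and> et t x \<noteq> Some v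
     then bN [x \<mapsto> v] \<times> bN (th t) else {})" for t x v unfolding g2_def by simp
  have g3_eq: "g3 (t, x, v) = (if is_leaf T R t \<and> Ut t = {} \<and> EC t
     then (UNIV :: ('k\<Rightarrow>'k) set) \<times> bN (th t) else {})" for t x v unfolding g3_def by simp
  have bN_upd: "\<zeta> \<in> bN [x \<mapsto> v] \<longleftrightarrow> \<zeta> x = v" for \<zeta> x v unfolding bN_def by auto
  define F where "F = range g1 \<union> range g2 \<union> range g3"
  define C where "C = - \<Union>F"
  have Pchain: "|P t| <o r" if "t \<in> T" for t
  proof -
    have "is_chain T R (P t)" unfolding is_chain_def P_def using lin[OF that] by blast
    then show ?thesis using chains by blast
  qed
  have th_dom: "dom (th t) = P t" for t unfolding th_def by (auto split: if_splits)
  have fin1: "|dom [x \<mapsto> (v::'k)]| <o r" for x v :: 'k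
    using fin_less[OF assms(1,2,3), of "{x}"] by simp
  have fin0: "|dom (Map.empty :: 'k \<Rightarrow> 'k option)| <o r"
    using fin_less[OF assms(1,2,3), of "{}::'k set"] by simp
  have UNIV_bN: "(UNIV :: ('k\<Rightarrow>'k) set) = bN Map.empty" unfolding bN_def by simp
  have leafT: "is_leaf T R t \<Longrightarrow> t \<in> T" for t unfolding is_leaf_def by blast
  have et_ok: "Ut t = bN (et t) \<and> |dom (et t)| <o r" if lf: "is_leaf T R t" and ne: "Ut t \<noteq> {}" for t
  proof -
    obtain U where U: "L t = LSet U" "U \<in> basic_open r" using leafs[OF leafT[OF lf] lf] by blast
    then have "Ut t = U" unfolding Ut_def by simp
    then have "\<exists>eta. Ut t = bN eta \<and> |dom eta| <o r" using U(2) ne unfolding basic_open_def by auto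
    then show ?thesis unfolding et_def by (rule someI_ex)
  qed
  have Fsub: "F \<subseteq> basic_open2 r"
  proof -
    have "g1 z \<in> basic_open2 r" for z
    proof (cases z)
      case (fields t s w)
      show ?thesis
      proof (cases "t \<in> T \<and> \<not> is_leaf T R t \<and> L t = LUnion \<and> s \<notin> imm_succ T R t")
        case True
        then have "g1 z = bN Map.empty \<times> bN [t \<mapsto> s]" using UNIV_bN by (simp add: g1_def fields)
        then show ?thesis using bo2I[OF fin0 fin1] by simp
      next
        case False
        then have "g1 z = {}" unfolding fields g1_def prod.case by (rule if_not_P)
        then show ?thesis using bo2E by simp
      qed
    qed
    moreover have "g2 z \<in> basic_open2 r" for z
    proof (cases z)
      case (fields t x v)
      show ?thesis
      proof (cases "is_leaf T R t \<and> Ut t \<noteq> {} \<and> EC t \<and> x \<in> dom (et t) \<and> et t x \<noteq> Some v")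
        case True
        then have "g2 z = bN [x \<mapsto> v] \<times> bN (th t)" by (simp add: g2_def fields)
        moreover have "|dom (th t)| <o r" using Pchain[OF leafT] True th_dom by simp
        ultimately show ?thesis using bo2I[OF fin1] by simp
      next
        case False
        then have "g2 z = {}" unfolding fields g2_def prod.case by (rule if_not_P)
        then show ?thesis using bo2E by simp
      qed
    qed
    moreover have "g3 z \<in> basic_open2 r" for z
    proof (cases z)
      case (fields t x v)
      show ?thesis
      proof (cases "is_leaf T R t \<and> Ut t = {} \<and> EC t")
        case True
        then have "g3 z = bN Map.empty \<times> bN (th t)" using UNIV_bN by (simp add: g3_def fields)
        moreover have "|dom (th t)| <o r" using Pchain[OF leafT] True th_dom by simp
        ultimately show ?thesis using bo2I[OF fin0] by simp
      next
        case False
        then have "g3 z = {}" unfolding fields g3_def prod.case by (rule if_not_P)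
        then show ?thesis using bo2E by simp
      qed
    qed
    ultimately show ?thesis unfolding F_def by blast
  qed
  have Fcard: "|F| \<le>o r"
  proof -
    have inf: "\<not> finite (Field r)" using assms(2,3) by simp
    show ?thesis unfolding F_def
      by (intro card_of_Un_ordLeq_infinite_Field[OF inf] range3_le[OF assms(1,2,3)] assms(1))
  qed
  have closed: "k_closed r (basic_open2 r) C"
    unfolding k_closed_def k_open_def C_def using Fsub Fcard by auto
  have uniq: "u1 = u2" if "t \<in> T" "u1 \<in> imm_succ T R s" "u2 \<in> imm_succ T R s" "(u1, t) \<in> R" "(u2, t) \<in> R" for t s u1 u2
  proof -
    from lin[OF that(1,4,5)] show ?thesis
      using that(2,3) unfolding imm_succ_def by blast
  qed
  have th_in: "th t s = Some u" if "EC t" "s \<in> P t" "u \<in> imm_succ T R s" "(u, t) \<in> R" "t \<in> T" for t s u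
  proof -
    have ex: "\<exists>u. u \<in> imm_succ T R s \<and> (u, t) \<in> R" using that by blast
    have "(SOME u. u \<in> imm_succ T R s \<and> (u, t) \<in> R) \<in> imm_succ T R s \<and>
          ((SOME u. u \<in> imm_succ T R s \<and> (u, t) \<in> R), t) \<in> R" using someI_ex[OF ex] .
    then show ?thesis unfolding th_def using that uniq by auto
  qed
  have cons_th: "consistent T R L \<sigma> t" if "EC t" "\<sigma> \<in> bN (th t)" for t \<sigma>
    unfolding consistent_def
  proof (intro ballI impI)
    fix s assume s: "s \<in> T" "(s, t) \<in> R \<and> s \<noteq> t \<and> L s = LUnion"
    then have sP: "s \<in> P t" unfolding P_def by blast
    then have "th t s = Some (SOME u. u \<in> imm_succ T R s \<and> (u, t) \<in> R)" unfolding th_def by simp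
    moreover have "s \<in> dom (th t)" using th_dom sP by simp
    ultimately have "\<sigma> s = (SOME u. u \<in> imm_succ T R s \<and> (u, t) \<in> R)"
      using that(2) unfolding bN_def by force
    moreover have "\<exists>u. u \<in> imm_succ T R s \<and> (u, t) \<in> R" using that(1) sP unfolding EC_def by blast
    ultimately show "(\<sigma> s, t) \<in> R" using someI_ex by metis
  qed
  have key: "(xi, \<sigma>) \<in> C \<longleftrightarrow> winning_II T R L xi \<sigma>" for xi \<sigma>
  proof
    assume inC: "(xi, \<sigma>) \<in> C"
    have nU: "(xi, \<sigma>) \<notin> \<Union>F" using inC unfolding C_def by blast
    have n1: "(xi, \<sigma>) \<notin> g1 z" for z using nU unfolding F_def by (metis UnCI UnionI rangeI)
    have n2: "(xi, \<sigma>) \<notin> g2 z" for z using nU unfolding F_def by (metis UnCI UnionI rangeI)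
    have n3: "(xi, \<sigma>) \<notin> g3 z" for z using nU unfolding F_def by (metis UnCI UnionI rangeI)
    have strat: "strategy_II T R L \<sigma>"
      unfolding strategy_II_def
    proof (intro ballI impI)
      fix t assume "t \<in> T" "\<not> is_leaf T R t \<and> L t = LUnion"
      show "\<sigma> t \<in> imm_succ T R t"
      proof (rule ccontr)
        assume "\<sigma> t \<notin> imm_succ T R t"
        then have "(xi, \<sigma>) \<in> g1 (t, \<sigma> t, t)" using \<open>t \<in> T\<close> \<open>\<not> is_leaf T R t \<and> L t = LUnion\<close>
          by (simp add: g1_eq bN_upd)
        then show False using n1 by blast
      qed
    qed
    show "winning_II T R L xi \<sigma>"
      unfolding winning_II_def
    proof (intro conjI strat allI impI)
      fix t assume t: "is_leaf T R t \<and> consistent T R L \<sigma> t"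
      have tT: "t \<in> T" using t leafT by blast
      have sP: "\<sigma> s \<in> imm_succ T R s \<and> (\<sigma> s, t) \<in> R" if "s \<in> P t" for s
      proof -
        have "s \<in> T" "(s, t) \<in> R" "s \<noteq> t" "L s = LUnion" using that unfolding P_def by auto
        moreover have "\<not> is_leaf T R s" using calculation tT unfolding is_leaf_def by blast
        ultimately show ?thesis using strat t unfolding strategy_II_def consistent_def by blast
      qed
      have ec: "EC t" unfolding EC_def using sP by blast
      have sig: "\<sigma> \<in> bN (th t)"
        unfolding bN_def
      proof (intro CollectI ballI)
        fix s assume "s \<in> dom (th t)"
        then have "s \<in> P t" using th_dom by simp
        then show "th t s = Some (\<sigma> s)" using th_in[OF ec _ _ _ tT] sP by blast
      qed
      obtain U where U: "L t = LSet U" "U \<in> basic_open r" using leafs[OF tT] t by blast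
      have Ueq: "Ut t = U" using U unfolding Ut_def by simp
      show "\<exists>U. L t = LSet U \<and> xi \<in> U"
      proof (cases "U = {}")
        case True
        then have "(xi, \<sigma>) \<in> g3 (t, t, t)" using t ec sig Ueq by (simp add: g3_eq)
        then show ?thesis using n3 by blast
      next
        case False
        have eo: "U = bN (et t)" using et_ok[of t] t False Ueq by simp
        show ?thesis
        proof (rule ccontr)
          assume "\<not> ?thesis"
          then have "xi \<notin> bN (et t)" using U eo by blast
          then obtain x where x: "x \<in> dom (et t)" "et t x \<noteq> Some (xi x)" unfolding bN_def by blast
          then have "(xi, \<sigma>) \<in> g2 (t, x, xi x)" using t ec sig Ueq False by (simp add: g2_eq bN_upd)
          then show False using n2 by blast
        qed
      qed
    qed
  next
    assume w: "winning_II T R L xi \<sigma>"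
    have strat: "strategy_II T R L \<sigma>" using w unfolding winning_II_def by blast
    have wl: "\<And>t. is_leaf T R t \<Longrightarrow> consistent T R L \<sigma> t \<Longrightarrow> \<exists>U. L t = LSet U \<and> xi \<in> U"
      using w unfolding winning_II_def by blast
    have "(xi, \<sigma>) \<notin> g1 z" for z
    proof (cases z)
      case (fields t s w)
      show ?thesis unfolding fields using strat unfolding strategy_II_def by (auto simp: g1_eq bN_upd)
    qed
    moreover have "(xi, \<sigma>) \<notin> g2 z" for z
    proof (cases z)
      case (fields t x v)
      show ?thesis
      proof
        assume a: "(xi, \<sigma>) \<in> g2 z"
        then have c: "is_leaf T R t" "Ut t \<noteq> {}" "EC t" "x \<in> dom (et t)" "et t x \<noteq> Some v"
          "xi \<in> bN [x \<mapsto> v]" "\<sigma> \<in> bN (th t)"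
          unfolding fields g2_eq by (auto split: if_splits)
        have "consistent T R L \<sigma> t" using cons_th c by blast
        then obtain U where "L t = LSet U" "xi \<in> U" using wl c by blast
        then have "xi \<in> bN (et t)" using et_ok[OF c(1,2)] unfolding Ut_def by simp
        moreover have "xi x = v" using c(6) unfolding bN_def by simp
        ultimately show False using c(4,5) unfolding bN_def by auto
      qed
    qed
    moreover have "(xi, \<sigma>) \<notin> g3 z" for z
    proof (cases z)
      case (fields t x v)
      show ?thesis
      proof
        assume a: "(xi, \<sigma>) \<in> g3 z"
        then have c: "is_leaf T R t" "Ut t = {}" "EC t" "\<sigma> \<in> bN (th t)"
          unfolding fields g3_eq by (auto split: if_splits)
        have "consistent T R L \<sigma> t" using cons_th c by blast
        then obtain U where "L t = LSet U" "xi \<in> U" using wl c by blast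
        then show False using c(2) unfolding Ut_def by simp
      qed
    qed
    ultimately show "(xi, \<sigma>) \<in> C" unfolding C_def F_def by auto
  qed
  have "X = {xi. \<exists>eta. (xi, eta) \<in> C}"
    using X key unfolding II_wins_def by auto
  then show ?thesis using closed by blast
qed

end
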